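(* Let $\rho\in(0,\infty)$ and $\bar v\in(0,1)$. There exist constants $c_1,c_2>0$ (depending only on $\bar v$, $\rho$ and $q$) such that for all $y\in\mathbb Z^2$ and $l\in\mathbb Z_+$, $\mathbb P^\rho[h(y)>l]\le c_1e^{-c_2l}$, where $h(y)=\inf\{l\in\mathbb Z_+:\ \omega(W^\times_y\cap W^\times_{y+(l,l)})=0\}$.
   Context: Fix $q\in(0,1)$. $W$ is the set of two-sided paths $w:\mathbb Z\to\mathbb Z$ with $|w(n+1)-w(n)|\le1$; $P_x$ is the law on $W$ of a two-sided lazy simple random walk (steps $-1,0,1$ with probabilities $\frac{1-q}2,q,\frac{1-q}2$) with $w(0)=x$. Under $\mathbb P^\rho$, $\omega$ is a Poisson point process on $W$ with intensity $\rho\sum_xP_x$. Cones: $\angle(x,n)=(x,n)+\{(x',n')\in\mathbb Z_+^2: x'\ge\bar vn'\}$ and $\angle^{\mathrm{rev}}(x,n)=(x,n)+\{(x',n')\in\mathbb Z_-^2: x'<\bar vn'\}$ ($\mathbb Z_\pm$ include $0$). The trace of $w$ is $\{(w(n),n):n\in\mathbb Z\}$; $W^\times_y$ is the set of $w\in W$ whose trace intersects both $\angle(y)$ and $\angle^{\mathrm{rev}}(y)$. *)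

theory Defs
  imports "HOL-Probability.Probability"
begin

type_synonym path = "int \<Rightarrow> int"

definition Wpaths :: "path set" where
  "Wpaths = {w. \<forall>n. \<bar>w (n + 1) - w n\<bar> \<le> 1}"

definition path_space :: "path measure" where
  "path_space = PiM UNIV (\<lambda>_::int. count_space (UNIV::int set))"

text \<open>Step law: -1, 0, 1 with probabilities (1-q)/2, q, (1-q)/2.\<close>
definition step_pmf :: "real \<Rightarrow> int pmf" where
  "step_pmf q = bernoulli_pmf q \<bind> (\<lambda>b. if b then return_pmf 0
      else map_pmf (\<lambda>b'. if b' then 1 else -1) (bernoulli_pmf (1/2)))"

text \<open>Two-sided path with w(0)=x built from i.i.d. increments xi, w(n+1)-w(n) = xi n.\<close>
definition path_of :: "int \<Rightarrow> (int \<Rightarrow> int) \<Rightarrow> path" where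
  "path_of x xi n = x + (if 0 \<le> n then sum xi {0..<n} else - sum xi {n..<0})"

definition Px :: "real \<Rightarrow> int \<Rightarrow> path measure" where
  "Px q x = distr (PiM UNIV (\<lambda>_::int. measure_pmf (step_pmf q))) path_space (path_of x)"

definition intensity :: "real \<Rightarrow> real \<Rightarrow> path set \<Rightarrow> ennreal" where
  "intensity q \<rho> A = ennreal \<rho> * (\<integral>\<^sup>+ x. emeasure (Px q x) A \<partial>count_space (UNIV::int set))"

definition is_PPP :: "'a measure \<Rightarrow> (path set \<Rightarrow> ennreal) \<Rightarrow> ('a \<Rightarrow> path measure) \<Rightarrow> bool" where
  "is_PPP M \<mu> \<omega> \<longleftrightarrow> prob_space M
     \<and> (\<forall>s\<in>space M. sets (\<omega> s) = sets path_space)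
     \<and> (\<forall>A\<in>sets path_space. (\<lambda>s. emeasure (\<omega> s) A) \<in> borel_measurable M)
     \<and> (\<forall>A\<in>sets path_space. \<mu> A < \<infinity> \<longrightarrow> (\<forall>k::nat.
          measure M {s\<in>space M. emeasure (\<omega> s) A = of_nat k}
            = enn2real (\<mu> A) ^ k / fact k * exp (- enn2real (\<mu> A))))
     \<and> (\<forall>(I::nat set) A. finite I \<longrightarrow> disjoint_family_on A I
          \<longrightarrow> (\<forall>i\<in>I. A i \<in> sets path_space \<and> \<mu> (A i) < \<infinity>)
          \<longrightarrow> prob_space.indep_vars M (\<lambda>_. borel) (\<lambda>i s. emeasure (\<omega> s) (A i)) I)"

text \<open>Cones (points are (space, time)).\<close>
definition cone :: "real \<Rightarrow> int \<times> int \<Rightarrow> (int \<times> int) set" where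
  "cone v y = {(fst y + a, snd y + b) | a b. 0 \<le> a \<and> 0 \<le> b \<and> real_of_int a \<ge> v * real_of_int b}"

definition cone_rev :: "real \<Rightarrow> int \<times> int \<Rightarrow> (int \<times> int) set" where
  "cone_rev v y = {(fst y + a, snd y + b) | a b. a \<le> 0 \<and> b \<le> 0 \<and> real_of_int a < v * real_of_int b}"

definition trace :: "path \<Rightarrow> (int \<times> int) set" where
  "trace w = {(w n, n) | n. True}"

definition Wcross :: "real \<Rightarrow> int \<times> int \<Rightarrow> path set" where
  "Wcross v y = {w \<in> Wpaths. trace w \<inter> cone v y \<noteq> {} \<and> trace w \<inter> cone_rev v y \<noteq> {}}"

definition hfun :: "real \<Rightarrow> path measure \<Rightarrow> int \<times> int \<Rightarrow> enat" where
  "hfun v om y = Inf (enat ` {l::nat. emeasure om (Wcross v y \<inter> Wcross v (fst y + int l, snd y + int l)) = 0})"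

end

theory Submission
  imports Defs
begin


lemma cs_borel: "measurable M (count_space (UNIV::int set)) = measurable M borel"
  by (rule measurable_cong_sets) (auto simp: sets_borel_eq_count_space)

lemma comp_cs: "(\<lambda>w::int\<Rightarrow>int. w n) \<in> measurable path_space (count_space UNIV)"
  unfolding path_space_def by simp

lemma comp_real[measurable]: "(\<lambda>w::int\<Rightarrow>int. real_of_int (w n)) \<in> borel_measurable path_space"
  by (rule measurable_compose[OF comp_cs]) simp

lemma pred_pt: "{w. (w n, n) \<in> C} \<in> sets path_space"
proof -
  have "(\<lambda>a::int. (a, n) \<in> C) \<in> measurable (count_space UNIV) (count_space UNIV)" by simp
  then have "Measurable.pred path_space (\<lambda>w. (w n, n) \<in> C)" by (rule measurable_compose[OF comp_cs])
  then show ?thesis by (simp add: pred_def path_space_def space_PiM)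
qed

lemma pred_step: "{w. \<bar>w (n + 1) - w n\<bar> \<le> 1} \<in> sets path_space"
proof -
  have "{w. \<bar>w (n + 1) - w n\<bar> \<le> 1} = {w \<in> space path_space. \<bar>real_of_int (w (n + 1)) - real_of_int (w n)\<bar> \<le> 1}"
    by (auto simp: path_space_def space_PiM)
  also have "\<dots> \<in> sets path_space" by measurable
  finally show ?thesis .
qed

lemma Wcross_sets: "Wcross v y \<in> sets path_space"
proof -
  have "Wcross v y = (\<Inter>n. {w. \<bar>w (n + 1) - w n\<bar> \<le> 1}) \<inter> (\<Union>n. {w. (w n, n) \<in> cone v y}) \<inter> (\<Union>n. {w. (w n, n) \<in> cone_rev v y})"
    by (auto simp: Wcross_def Wpaths_def trace_def)
  also have "\<dots> \<in> sets path_space"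
    by (intro sets.Int sets.countable_INT' sets.countable_UN') (auto intro: pred_pt pred_step)
  finally show ?thesis .
qed



definition Pst :: "real \<Rightarrow> (int \<Rightarrow> int) measure" where
  "Pst q = PiM UNIV (\<lambda>_::int. measure_pmf (step_pmf q))"

lemma pps: "product_prob_space (\<lambda>_::int. measure_pmf (step_pmf q))"
  unfolding product_prob_space_def product_prob_space_axioms_def product_sigma_finite_def
  by (auto intro: prob_space_measure_pmf prob_space_imp_sigma_finite)

lemma space_Pst[simp]: "space (Pst q) = UNIV"
  by (simp add: Pst_def space_PiM)

lemma prob_Pst: "prob_space (Pst q)"
proof -
  interpret product_prob_space "\<lambda>_::int. measure_pmf (step_pmf q)" UNIV by (rule pps)
  show ?thesis unfolding Pst_def by (rule P.prob_space_axioms)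
qed

lemma comp_Pst_cs: "(\<lambda>\<xi>::int\<Rightarrow>int. \<xi> i) \<in> measurable (Pst q) (count_space UNIV)"
  unfolding Pst_def by measurable

lemma comp_Pst[measurable]: "(\<lambda>\<xi>::int\<Rightarrow>int. real_of_int (\<xi> i)) \<in> borel_measurable (Pst q)"
  by (rule measurable_compose[OF comp_Pst_cs]) simp

lemma path_of_meas: "path_of x \<in> measurable (Pst q) path_space"
proof -
  have "(\<lambda>\<xi> n. path_of x \<xi> n) \<in> measurable (Pst q) (PiM UNIV (\<lambda>_. count_space UNIV))"
  proof (rule measurable_PiM_single')
    fix n :: int
    have e: "(\<lambda>\<xi>. path_of x \<xi> n) = (\<lambda>\<xi>. floor (real_of_int x + (if 0 \<le> n then \<Sum>i\<in>{0..<n}. real_of_int (\<xi> i) else - (\<Sum>i\<in>{n..<0}. real_of_int (\<xi> i)))))"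
      by (rule ext) (auto simp: path_of_def simp flip: of_int_sum of_int_minus)
    have "(\<lambda>\<xi>. real_of_int x + (if 0 \<le> n then \<Sum>i\<in>{0..<n}. real_of_int (\<xi> i) else - (\<Sum>i\<in>{n..<0}. real_of_int (\<xi> i)))) \<in> borel_measurable (Pst q)"
      by measurable
    then show "(\<lambda>\<xi>. path_of x \<xi> n) \<in> measurable (Pst q) (count_space UNIV)"
      unfolding e by (rule measurable_compose) (rule measurable_real_floor)
  qed auto
  then show ?thesis unfolding path_space_def by simp
qed

lemma integral_prod:
  assumes "finite J"
  shows "(\<integral>\<^sup>+\<xi>. (\<Prod>k\<in>J. f (\<xi> k)) \<partial>Pst q) = (\<integral>\<^sup>+z. f z \<partial>measure_pmf (step_pmf q)) ^ card J"
proof -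
  interpret product_prob_space "\<lambda>_::int. measure_pmf (step_pmf q)" UNIV by (rule pps)
  let ?M = "\<lambda>_::int. measure_pmf (step_pmf q)"
  have fm: "(\<lambda>x. \<Prod>k\<in>J. f (x k)) \<in> borel_measurable (PiM J ?M)"
    by measurable
  have "(\<integral>\<^sup>+\<xi>. (\<Prod>k\<in>J. f (\<xi> k)) \<partial>Pst q) = (\<integral>\<^sup>+\<xi>. (\<lambda>x. \<Prod>k\<in>J. f (x k)) (restrict \<xi> J) \<partial>PiM UNIV ?M)"
    unfolding Pst_def by (intro nn_integral_cong prod.cong) auto
  also have "\<dots> = (\<integral>\<^sup>+x. (\<Prod>k\<in>J. f (x k)) \<partial>distr (PiM UNIV ?M) (PiM J ?M) (\<lambda>x. restrict x J))"
    apply (rule nn_integral_distr[symmetric])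
     apply (rule measurable_restrict_subset)
     apply simp
    using fm apply simp
    done
  also have "\<dots> = (\<integral>\<^sup>+x. (\<Prod>k\<in>J. f (x k)) \<partial>PiM J ?M)"
    using assms by (simp add: distr_PiM_restrict_finite)
  also have "\<dots> = (\<Prod>k\<in>J. \<integral>\<^sup>+z. f z \<partial>measure_pmf (step_pmf q))"
    using assms by (subst product_nn_integral_prod) auto
  finally show ?thesis by simp
qed

lemma step_int:
  assumes "0 \<le> q" "q \<le> 1"
  shows "(\<integral>\<^sup>+z. ennreal (exp (t * real_of_int z)) \<partial>measure_pmf (step_pmf q)) = ennreal (q + (1 - q) * ((exp t + exp (- t)) / 2))"
proof -
  have "(\<integral>\<^sup>+z. ennreal (exp (t * real_of_int z)) \<partial>measure_pmf (step_pmf q))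
     = ennreal q + (ennreal (exp t) * ennreal (1/2) + ennreal (exp (-t)) * ennreal (1/2)) * ennreal (1 - q)"
    using assms unfolding step_pmf_def by simp
  also have "\<dots> = ennreal q + (ennreal (exp t / 2) + ennreal (exp (-t) / 2)) * ennreal (1 - q)"
  proof -
    have "\<And>a::real. a \<ge> 0 \<Longrightarrow> ennreal a * inverse 2 = ennreal (a / 2)"
      by (simp add: divide_ennreal[symmetric] divide_ennreal_def)
    then show ?thesis by simp
  qed
  also have "\<dots> = ennreal (q + (exp t / 2 + exp (-t) / 2) * (1 - q))"
    using assms by (simp add: ennreal_plus[symmetric] ennreal_mult[symmetric] del: ennreal_plus)
  finally show ?thesis by (simp add: field_simps)
qed



lemma sum_split_int: "(a::int) \<le> b \<Longrightarrow> b \<le> c \<Longrightarrow> sum f {a..<c} = sum f {a..<b} + sum f {b..<c}"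
proof -
  assume "a \<le> b" "b \<le> c"
  then have "{a..<c} = {a..<b} \<union> {b..<c}" by auto
  then show ?thesis by (simp add: sum.union_disjoint)
qed

lemma path_diff:
  assumes "n1 \<le> n2"
  shows "path_of x \<xi> n2 - path_of x \<xi> n1 = sum \<xi> {n1..<n2}"
proof (cases "0 \<le> n1")
  case True
  then show ?thesis using assms sum_split_int[of 0 n1 n2 \<xi>] by (simp add: path_of_def)
next
  case False
  show ?thesis
  proof (cases "0 \<le> n2")
    case True
    then show ?thesis using assms False sum_split_int[of n1 0 n2 \<xi>] by (simp add: path_of_def)
  next
    case F2: False
    then show ?thesis using assms False sum_split_int[of n1 n2 0 \<xi>] by (simp add: path_of_def)
  qed
qed

lemma path_shift: "path_of x \<xi> n = x + path_of 0 \<xi> n"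
  by (simp add: path_of_def)

lemma le_count_int: "f a \<le> (\<integral>\<^sup>+z. f z \<partial>count_space UNIV)"
proof -
  have "f a = (\<integral>\<^sup>+z. f z * indicator {a} z \<partial>count_space UNIV)" by simp
  also have "\<dots> \<le> (\<integral>\<^sup>+z. f z \<partial>count_space UNIV)"
    by (intro nn_integral_mono) (simp add: indicator_def)
  finally show ?thesis .
qed

lemma cnt:
  assumes "0 < t"
  shows "(\<integral>\<^sup>+x. indicator {x::int. real_of_int x < U \<and> L \<le> real_of_int x} x \<partial>count_space UNIV) \<le> ennreal (exp (t * (U - L + 1)) / t)"
proof -
  let ?A = "{x::int. real_of_int x < U \<and> L \<le> real_of_int x}"
  have sub: "?A \<subseteq> {\<lceil>L\<rceil>..<\<lceil>U\<rceil>}"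
    by (auto simp: ceiling_le_iff less_ceiling_iff)
  then have fin: "finite ?A" by (rule finite_subset) simp
  have "card ?A \<le> card {\<lceil>L\<rceil>..<\<lceil>U\<rceil>}" by (rule card_mono[OF _ sub]) simp
  also have "\<dots> = nat (\<lceil>U\<rceil> - \<lceil>L\<rceil>)" by simp
  finally have c0: "real (card ?A) \<le> real (nat (\<lceil>U\<rceil> - \<lceil>L\<rceil>))" by (rule of_nat_mono)
  have c1: "real (nat (\<lceil>U\<rceil> - \<lceil>L\<rceil>)) = max 0 (real_of_int (\<lceil>U\<rceil> - \<lceil>L\<rceil>))" by simp
  have c2: "real_of_int \<lceil>U\<rceil> < U + 1" "L \<le> real_of_int \<lceil>L\<rceil>" by linarith+
  have c3: "max 0 (real_of_int (\<lceil>U\<rceil> - \<lceil>L\<rceil>)) \<le> max 0 (U - L + 1)"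
  proof -
    have "real_of_int \<lceil>U\<rceil> - real_of_int \<lceil>L\<rceil> \<le> U - L + 1" using c2 by linarith
    then show ?thesis unfolding of_int_diff by (rule max.mono[OF order_refl])
  qed
  have c: "real (card ?A) \<le> max 0 (U - L + 1)" using c0 c1 c3 by linarith
  have e: "max 0 (U - L + 1) \<le> exp (t * (U - L + 1)) / t"
  proof (cases "U - L + 1 \<le> 0")
    case True then show ?thesis using assms by simp
  next
    case False
    have "t * (U - L + 1) \<le> exp (t * (U - L + 1))"
      using exp_ge_add_one_self[of "t * (U - L + 1)"] by linarith
    then show ?thesis using assms False by (simp add: field_simps)
  qed
  have "(\<integral>\<^sup>+x. indicator ?A x \<partial>count_space UNIV) = emeasure (count_space UNIV) ?A"
    by simp
  also have "\<dots> = ennreal (real (card ?A))" using fin by (simp add: ennreal_of_nat_eq_real_of_nat)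
  also have "\<dots> \<le> ennreal (exp (t * (U - L + 1)) / t)"
    using c e by (intro ennreal_leI) linarith
  finally show ?thesis .
qed

lemma consts_ok:
  fixes q v :: real
  assumes "0 < q" "q < 1" "0 < v" "v < 1"
  defines "t \<equiv> v / 2"
  defines "\<phi> \<equiv> q + (1 - q) * ((exp t + exp (- t)) / 2)"
  shows "0 < \<phi>" "\<phi> < exp (t * v)"
proof -
  show "0 < \<phi>" using assms unfolding \<phi>_def by (simp add: add_pos_nonneg)
  have t0: "0 < t" "t \<le> 1" using assms unfolding t_def by auto
  have e1: "exp t \<le> 1 + t + t^2" using exp_bound[of t] t0 by simp
  have "1 + t \<le> exp t" by (rule exp_ge_add_one_self)
  then have "exp (-t) \<le> 1 / (1 + t)" using t0 by (simp add: exp_minus field_simps)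
  also have "\<dots> \<le> 1 - t + t^2"
  proof -
    have "(1 - t + t^2) * (1 + t) = 1 + t^3" by (simp add: algebra_simps power2_eq_square power3_eq_cube)
    moreover have "0 \<le> t^3" using t0 by simp
    ultimately have "1 \<le> (1 - t + t^2) * (1 + t)" by linarith
    then show ?thesis using t0 by (simp add: divide_le_eq)
  qed
  finally have e2: "exp (-t) \<le> 1 - t + t^2" .
  have "\<phi> \<le> q + (1 - q) * (1 + t^2)"
    unfolding \<phi>_def using e1 e2 assms by (intro add_left_mono mult_left_mono) auto
  also have "\<dots> \<le> 1 + t^2"
  proof -
    have "(1 - q) * t^2 \<le> t^2" using assms by (intro mult_left_le_one_le) auto
    then show ?thesis by (simp add: algebra_simps)
  qed
  also have "\<dots> < 1 + t * v" using t0 unfolding t_def by (simp add: power2_eq_square assms)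
  also have "\<dots> \<le> exp (t * v)" by (rule exp_ge_add_one_self)
  finally show "\<phi> < exp (t * v)" .
qed



lemma geo1:
  fixes r K :: real
  assumes "0 \<le> r" "r < 1" "0 \<le> K"
  shows "(\<Sum>j. ennreal (K * r ^ j)) = ennreal (K / (1 - r))"
proof -
  have s: "summable (\<lambda>j. r ^ j)" using assms by (intro summable_geometric) simp
  have "(\<Sum>j. ennreal (K * r ^ j)) = ennreal (\<Sum>j. K * r ^ j)"
    using assms s by (intro suminf_ennreal2 summable_mult) auto
  also have "(\<Sum>j. K * r ^ j) = K * (\<Sum>j. r ^ j)" using s by (rule suminf_mult)
  also have "(\<Sum>j. r ^ j) = 1 / (1 - r)" using assms by (intro suminf_geometric) simp
  finally show ?thesis by simp
qed

lemma geo2: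
  fixes r K :: real
  assumes "0 \<le> r" "r < 1" "0 \<le> K"
  shows "(\<integral>\<^sup>+p. ennreal (K * r ^ (fst p) * r ^ (snd p)) \<partial>count_space (UNIV::(nat\<times>nat) set)) = ennreal (K / (1 - r)^2)"
proof -
  have "(\<integral>\<^sup>+p. ennreal (K * r ^ (fst p) * r ^ (snd p)) \<partial>count_space (UNIV::(nat\<times>nat) set))
      = (\<integral>\<^sup>+i. \<integral>\<^sup>+j. ennreal (K * r ^ i * r ^ j) \<partial>count_space UNIV \<partial>count_space UNIV)"
    using nn_integral_fst_count_space[of "\<lambda>p. ennreal (K * r ^ (fst p) * r ^ (snd p))"] by simp
  also have "\<dots> = (\<Sum>i. \<Sum>j. ennreal ((K * r ^ i) * r ^ j))"
    by (simp add: nn_integral_count_space_nat)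
  also have "\<dots> = (\<Sum>i. ennreal ((K / (1 - r)) * r ^ i))"
  proof (intro suminf_cong)
    fix i
    have e: "K / (1 - r) * r ^ i = K * r ^ i / (1 - r)" by simp
    show "(\<Sum>j. ennreal ((K * r ^ i) * r ^ j)) = ennreal ((K / (1 - r)) * r ^ i)"
      unfolding e using assms by (intro geo1) auto
  qed
  also have "\<dots> = ennreal (K / (1 - r) / (1 - r))"
    using assms by (intro geo1) auto
  finally show ?thesis by (simp add: power2_eq_square)
qed



lemma real_ineq:
  fixes t v \<phi> r :: real and l i j :: nat
  assumes "0 < t" "0 \<le> r" "r \<le> 1" "\<phi> = r * exp (t * v)"
  shows "exp (t * (1 - v * real (i + j) - real l)) / t * \<phi> ^ (l + i + j)
     \<le> (exp t / t * exp (- (t * (1 - v)) * real l)) * r ^ i * r ^ j"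
proof -
  have p: "\<phi> ^ (l + i + j) = r ^ l * r ^ i * r ^ j * exp (real (l + i + j) * (t * v))"
    unfolding assms(4) power_mult_distrib exp_of_nat_mult power_add by simp
  have ex: "exp (t * (1 - v * real (i + j) - real l)) * exp (real (l + i + j) * (t * v))
      = exp t * exp (- (t * (1 - v)) * real l)"
    unfolding exp_add[symmetric] by (rule arg_cong[where f=exp]) (simp add: algebra_simps)
  have "exp (t * (1 - v * real (i + j) - real l)) / t * \<phi> ^ (l + i + j)
      = (exp (t * (1 - v * real (i + j) - real l)) * exp (real (l + i + j) * (t * v))) / t * r ^ l * r ^ i * r ^ j"
    unfolding p by (simp add: field_simps)
  also have "\<dots> = (exp t / t * exp (- (t * (1 - v)) * real l)) * r ^ i * r ^ j * r ^ l"
    unfolding ex by (simp add: field_simps)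
  also have "\<dots> \<le> (exp t / t * exp (- (t * (1 - v)) * real l)) * r ^ i * r ^ j * 1"
    using assms by (intro mult_left_mono power_le_one) auto
  finally show ?thesis by simp
qed



lemma cover:
  fixes y1 y2 :: int and l :: nat
  assumes "path_of x \<xi> \<in> Wcross v (y1, y2) \<inter> Wcross v (y1 + int l, y2 + int l)"
  shows "\<exists>i j. real_of_int x < real_of_int y1 - v * real i - real_of_int (path_of 0 \<xi> (y2 - int i))
     \<and> real_of_int y1 + real l + v * real j - real_of_int (path_of 0 \<xi> (y2 + int l + int j)) \<le> real_of_int x"
proof -
  let ?w = "path_of x \<xi>"
  from assms have "trace ?w \<inter> cone_rev v (y1, y2) \<noteq> {}" by (simp add: Wcross_def)
  then obtain n a b where 1: "?w n = y1 + a" "n = y2 + b" "a \<le> 0" "b \<le> 0" "real_of_int a < v * real_of_int b"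
    by (auto simp: trace_def cone_rev_def)
  from assms have "trace ?w \<inter> cone v (y1 + int l, y2 + int l) \<noteq> {}" by (simp add: Wcross_def)
  then obtain n' a' b' where 2: "?w n' = y1 + int l + a'" "n' = y2 + int l + b'" "0 \<le> a'" "0 \<le> b'" "real_of_int a' \<ge> v * real_of_int b'"
    by (auto simp: trace_def cone_def)
  define i where "i = nat (- b)"
  define j where "j = nat b'"
  have ni: "n = y2 - int i" "real i = - real_of_int b" using 1 by (auto simp: i_def)
  have nj: "n' = y2 + int l + int j" "real j = real_of_int b'" using 2 by (auto simp: j_def)
  have w1: "real_of_int x + real_of_int (path_of 0 \<xi> n) = real_of_int y1 + real_of_int a"
    using 1(1) path_shift[of x \<xi> n] by (metis of_int_add)
  have w2: "real_of_int x + real_of_int (path_of 0 \<xi> n') = real_of_int y1 + real l + real_of_int a'"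
    using 2(1) path_shift[of x \<xi> n'] by (metis of_int_add of_int_of_nat_eq)
  show ?thesis
    apply (rule exI[of _ i], rule exI[of _ j])
    using w1 w2 ni nj 1(5) 2(5) by (auto simp: algebra_simps)
qed



lemma pointwise:
  fixes y1 y2 :: int and l :: nat and t v :: real
  assumes t: "0 < t"
  defines "J \<equiv> \<lambda>i j. {y2 - int i..<y2 + int l + int j}"
  defines "c \<equiv> \<lambda>i j::nat. exp (t * (1 - v * real (i + j) - real l)) / t"
  defines "G \<equiv> \<lambda>p \<xi>. ennreal (c (fst p) (snd p)) * (\<Prod>k\<in>J (fst p) (snd p). ennreal (exp (t * real_of_int (\<xi> k))))"
  shows "(\<integral>\<^sup>+x. indicator (Wcross v (y1, y2) \<inter> Wcross v (y1 + int l, y2 + int l)) (path_of x \<xi>) \<partial>count_space UNIV)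
     \<le> (\<integral>\<^sup>+p. G p \<xi> \<partial>count_space UNIV)"
proof -
  let ?S = "Wcross v (y1, y2) \<inter> Wcross v (y1 + int l, y2 + int l)"
  define U where "U = (\<lambda>i::nat. real_of_int y1 - v * real i - real_of_int (path_of 0 \<xi> (y2 - int i)))"
  define L where "L = (\<lambda>j::nat. real_of_int y1 + real l + v * real j - real_of_int (path_of 0 \<xi> (y2 + int l + int j)))"
  define A where "A = (\<lambda>p::nat\<times>nat. {x::int. real_of_int x < U (fst p) \<and> L (snd p) \<le> real_of_int x})"
  have "(\<integral>\<^sup>+x. indicator ?S (path_of x \<xi>) \<partial>count_space UNIV)
      \<le> (\<integral>\<^sup>+x. \<integral>\<^sup>+p. indicator (A p) x \<partial>count_space UNIV \<partial>count_space UNIV)"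
  proof (intro nn_integral_mono)
    fix x :: int
    show "indicator ?S (path_of x \<xi>) \<le> (\<integral>\<^sup>+p. indicator (A p) x \<partial>count_space UNIV)"
    proof (cases "path_of x \<xi> \<in> ?S")
      case True
      from cover[OF True] obtain i j where "x \<in> A (i, j)"
        unfolding A_def U_def L_def by auto
      then have "indicator ?S (path_of x \<xi>) \<le> (indicator (A (i, j)) x :: ennreal)"
        using True by simp
      also have "\<dots> \<le> (\<integral>\<^sup>+p. indicator (A p) x \<partial>count_space UNIV)"
        by (rule le_count_int[of "\<lambda>p. indicator (A p) x"])
      finally show ?thesis .
    qed simp
  qed
  also have "\<dots> = (\<integral>\<^sup>+p. \<integral>\<^sup>+x. indicator (A p) x \<partial>count_space UNIV \<partial>count_space UNIV)"
    by (rule nn_integral_count_space_nn_integral) auto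
  also have "\<dots> \<le> (\<integral>\<^sup>+p. G p \<xi> \<partial>count_space UNIV)"
  proof (intro nn_integral_mono)
    fix p :: "nat \<times> nat"
    obtain i j where pij: "p = (i, j)" by (cases p)
    have le: "y2 - int i \<le> y2 + int l + int j" by simp
    have D: "real_of_int (path_of 0 \<xi> (y2 + int l + int j)) - real_of_int (path_of 0 \<xi> (y2 - int i))
        = (\<Sum>k\<in>J i j. real_of_int (\<xi> k))"
      using path_diff[OF le, of 0 \<xi>] unfolding J_def by (metis of_int_diff of_int_sum)
    have UL: "U i - L j + 1 = (\<Sum>k\<in>J i j. real_of_int (\<xi> k)) - v * real (i + j) - real l + 1"
      unfolding U_def L_def using D by (simp add: algebra_simps)
    have "(\<integral>\<^sup>+x. indicator (A p) x \<partial>count_space UNIV) \<le> ennreal (exp (t * (U i - L j + 1)) / t)"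
      unfolding A_def pij fst_conv snd_conv by (rule cnt[OF t])
    also have "exp (t * (U i - L j + 1)) / t = c i j * (\<Prod>k\<in>J i j. exp (t * real_of_int (\<xi> k)))"
    proof -
      have "exp (t * (U i - L j + 1)) = exp (t * (1 - v * real (i + j) - real l)) * exp (\<Sum>k\<in>J i j. t * real_of_int (\<xi> k))"
        unfolding UL exp_add[symmetric] sum_distrib_left[symmetric] by (rule arg_cong[where f=exp]) (simp add: algebra_simps)
      then show ?thesis unfolding c_def exp_sum[OF finite_atLeastLessThan_int[of _ _, folded J_def]]
        by (simp add: J_def exp_sum)
    qed
    also have "ennreal \<dots> = G p \<xi>"
    proof -
      have c0: "0 \<le> c i j" unfolding c_def using t by simp
      have P0: "0 \<le> (\<Prod>k\<in>J i j. exp (t * real_of_int (\<xi> k)))" by (rule prod_nonneg) simp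
      show ?thesis
        unfolding G_def pij fst_conv snd_conv ennreal_mult[OF c0 P0]
        by (simp add: prod_ennreal)
    qed
    finally show "(\<integral>\<^sup>+x. indicator (A p) x \<partial>count_space UNIV) \<le> G p \<xi>" .
  qed
  finally show ?thesis .
qed



lemma intensity_bound:
  fixes q \<rho> v :: real and y1 y2 :: int and l :: nat
  assumes q: "0 < q" "q < 1" and rho: "0 < \<rho>" and v: "0 < v" "v < 1"
  defines "t \<equiv> v / 2"
  defines "\<phi> \<equiv> q + (1 - q) * ((exp t + exp (- t)) / 2)"
  defines "r \<equiv> \<phi> / exp (t * v)"
  shows "intensity q \<rho> (Wcross v (y1, y2) \<inter> Wcross v (y1 + int l, y2 + int l))
     \<le> ennreal (\<rho> * ((exp t / t * exp (- (t * (1 - v)) * real l)) / (1 - r)^2))"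
proof -
  let ?S = "Wcross v (y1, y2) \<inter> Wcross v (y1 + int l, y2 + int l)"
  have t: "0 < t" using v unfolding t_def by simp
  have ph: "0 < \<phi>" "\<phi> < exp (t * v)" using consts_ok[OF q v] unfolding \<phi>_def t_def by auto
  have r: "0 \<le> r" "r < 1" "\<phi> = r * exp (t * v)" using ph unfolding r_def by (auto simp: divide_less_eq)
  define J where "J \<equiv> \<lambda>i j. {y2 - int i..<y2 + int l + int j}"
  define c where "c \<equiv> \<lambda>i j::nat. exp (t * (1 - v * real (i + j) - real l)) / t"
  define G where "G \<equiv> \<lambda>p \<xi>. ennreal (c (fst p) (snd p)) * (\<Prod>k\<in>J (fst p) (snd p). ennreal (exp (t * real_of_int (\<xi> k))))"
  define K where "K = exp t / t * exp (- (t * (1 - v)) * real l)"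
  have K0: "0 \<le> K" unfolding K_def using t by simp
  have Sset: "?S \<in> sets path_space" by (intro sets.Int Wcross_sets)
  have em: "emeasure (Px q x) ?S = (\<integral>\<^sup>+\<xi>. indicator ?S (path_of x \<xi>) \<partial>Pst q)" for x
  proof -
    have "Px q x = distr (Pst q) path_space (path_of x)" by (simp add: Px_def Pst_def)
    then have "emeasure (Px q x) ?S = emeasure (Pst q) (path_of x -` ?S \<inter> space (Pst q))"
      using emeasure_distr[OF path_of_meas Sset] by simp
    also have "\<dots> = (\<integral>\<^sup>+\<xi>. indicator (path_of x -` ?S \<inter> space (Pst q)) \<xi> \<partial>Pst q)"
      by (rule nn_integral_indicator[symmetric]) (rule measurable_sets[OF path_of_meas Sset])
    also have "\<dots> = (\<integral>\<^sup>+\<xi>. indicator ?S (path_of x \<xi>) \<partial>Pst q)"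
      by (intro nn_integral_cong) (simp add: indicator_def)
    finally show ?thesis .
  qed
  have imeas: "(\<lambda>\<xi>. indicator ?S (path_of x \<xi>) :: ennreal) \<in> borel_measurable (Pst q)" for x
    by (rule measurable_compose[OF path_of_meas]) (rule borel_measurable_indicator[OF Sset])
  have Gmeas: "(\<lambda>\<xi>. G p \<xi>) \<in> borel_measurable (Pst q)" for p
    unfolding G_def by measurable
  have intG: "(\<integral>\<^sup>+\<xi>. G p \<xi> \<partial>Pst q) \<le> ennreal (K * r ^ (fst p) * r ^ (snd p))" for p
  proof -
    obtain i j where pij: "p = (i, j)" by (cases p)
    have cJ: "card (J i j) = l + i + j" unfolding J_def by simp
    have c0: "0 \<le> c i j" unfolding c_def using t by simp
    have "(\<integral>\<^sup>+\<xi>. G p \<xi> \<partial>Pst q) = ennreal (c i j) * (\<integral>\<^sup>+\<xi>. (\<Prod>k\<in>J i j. ennreal (exp (t * real_of_int (\<xi> k)))) \<partial>Pst q)"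
      unfolding G_def pij fst_conv snd_conv by (rule nn_integral_cmult) measurable
    also have "\<dots> = ennreal (c i j) * ennreal \<phi> ^ (l + i + j)"
    proof -
      have fJ: "finite (J i j)" by (simp add: J_def)
      have "(\<integral>\<^sup>+\<xi>. (\<Prod>k\<in>J i j. ennreal (exp (t * real_of_int (\<xi> k)))) \<partial>Pst q)
          = (\<integral>\<^sup>+z. ennreal (exp (t * real_of_int z)) \<partial>measure_pmf (step_pmf q)) ^ card (J i j)"
        by (rule integral_prod[OF fJ])
      also have "\<dots> = ennreal \<phi> ^ (l + i + j)"
        unfolding cJ step_int[OF less_imp_le[OF q(1)] less_imp_le[OF q(2)]] \<phi>_def ..
      finally show ?thesis by simp
    qed
    also have "\<dots> = ennreal (c i j * \<phi> ^ (l + i + j))"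
      using c0 ph by (simp add: ennreal_mult ennreal_power)
    also have "\<dots> \<le> ennreal (K * r ^ i * r ^ j)"
      using real_ineq[OF t r(1) _ r(3), of i j l] r(2) unfolding c_def K_def
      by (intro ennreal_leI) auto
    finally show ?thesis unfolding pij by simp
  qed
  have "intensity q \<rho> ?S = ennreal \<rho> * (\<integral>\<^sup>+x. \<integral>\<^sup>+\<xi>. indicator ?S (path_of x \<xi>) \<partial>Pst q \<partial>count_space UNIV)"
    unfolding intensity_def em ..
  also have "(\<integral>\<^sup>+x. \<integral>\<^sup>+\<xi>. indicator ?S (path_of x \<xi>) \<partial>Pst q \<partial>count_space UNIV)
      = (\<integral>\<^sup>+\<xi>. \<integral>\<^sup>+x. indicator ?S (path_of x \<xi>) \<partial>count_space UNIV \<partial>Pst q)"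
    by (rule nn_integral_count_space_nn_integral[symmetric]) (auto intro: imeas)
  also have "\<dots> \<le> (\<integral>\<^sup>+\<xi>. \<integral>\<^sup>+p. G p \<xi> \<partial>count_space UNIV \<partial>Pst q)"
    by (intro nn_integral_mono) (unfold G_def c_def J_def, rule pointwise[OF t])
  also have "\<dots> = (\<integral>\<^sup>+p. \<integral>\<^sup>+\<xi>. G p \<xi> \<partial>Pst q \<partial>count_space UNIV)"
    by (rule nn_integral_count_space_nn_integral) (auto intro: Gmeas)
  also have "\<dots> \<le> (\<integral>\<^sup>+p. ennreal (K * r ^ (fst p) * r ^ (snd p)) \<partial>count_space UNIV)"
    by (intro nn_integral_mono intG)
  also have "\<dots> = ennreal (K / (1 - r)^2)"
    by (rule geo2[OF r(1) r(2) K0])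
  finally have "intensity q \<rho> ?S \<le> ennreal \<rho> * ennreal (K / (1 - r)^2)"
    by (simp add: mult_left_mono)
  also have "\<dots> = ennreal (\<rho> * (K / (1 - r)^2))"
    using rho K0 r by (subst ennreal_mult[symmetric]) auto
  finally show ?thesis unfolding K_def .
qed



theorem lemma4p3:
  fixes q \<rho> v :: real
  assumes "0 < q" "q < 1" "0 < \<rho>" "0 < v" "v < 1"
  shows "\<exists>c1 c2. 0 < c1 \<and> 0 < c2 \<and>
    (\<forall>(M::'a measure) \<omega>. is_PPP M (intensity q \<rho>) \<omega> \<longrightarrow>
      (\<forall>(y::int \<times> int) (l::nat).
         measure M {s \<in> space M. hfun v (\<omega> s) y > enat l} \<le> c1 * exp (- c2 * real l)))"
proof -
  define t where "t \<equiv> v / 2"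
  define \<phi> where "\<phi> \<equiv> q + (1 - q) * ((exp t + exp (- t)) / 2)"
  define r where "r \<equiv> \<phi> / exp (t * v)"
  have t: "0 < t" using assms unfolding t_def by simp
  have ph: "0 < \<phi>" "\<phi> < exp (t * v)" using consts_ok[OF assms(1,2,4,5)] unfolding \<phi>_def t_def by auto
  have r: "0 \<le> r" "r < 1" using ph unfolding r_def by (auto simp: divide_less_eq)
  define c1 where "c1 = \<rho> * (exp t / t) / (1 - r)^2"
  define c2 where "c2 = t * (1 - v)"
  have c1: "0 < c1" unfolding c1_def using assms t r by simp
  have c2: "0 < c2" unfolding c2_def using assms t by simp
  show ?thesis
  proof (intro exI conjI allI impI)
    show "0 < c1" "0 < c2" by (fact c1, fact c2)
    fix M :: "'a measure" and \<omega> and y :: "int \<times> int" and l :: nat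
    assume ppp: "is_PPP M (intensity q \<rho>) \<omega>"
    obtain y1 y2 :: int where y: "y = (y1, y2)" by (cases y)
    let ?S = "Wcross v (y1, y2) \<inter> Wcross v (y1 + int l, y2 + int l)"
    define B where "B = \<rho> * ((exp t / t * exp (- (t * (1 - v)) * real l)) / (1 - r)^2)"
    have Beq: "B = c1 * exp (- c2 * real l)" unfolding B_def c1_def c2_def by (simp add: field_simps)
    have B0: "0 \<le> B" unfolding Beq using c1 by simp
    have mu: "intensity q \<rho> ?S \<le> ennreal B"
      unfolding B_def t_def r_def \<phi>_def using intensity_bound[OF assms, of y1 y2 l] by simp
    then have mufin: "intensity q \<rho> ?S < \<infinity>" by (simp add: le_less_trans)
    have m_le: "enn2real (intensity q \<rho> ?S) \<le> B"
      using mu B0 by (metis enn2real_ennreal enn2real_mono ennreal_neq_top top.not_eq_extremum)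
    have P: "prob_space M" using ppp by (simp add: is_PPP_def)
    interpret prob_space M by (fact P)
    have Sset: "?S \<in> sets path_space" by (intro sets.Int Wcross_sets)
    have meas: "(\<lambda>s. emeasure (\<omega> s) ?S) \<in> borel_measurable M" using ppp Sset by (simp add: is_PPP_def)
    let ?E0 = "{s \<in> space M. emeasure (\<omega> s) ?S = 0}"
    have E0s: "?E0 \<in> sets M"
      using measurable_sets[OF meas, of "{0}"] by (simp add: vimage_def Int_def conj_commute)
    have pE0: "measure M ?E0 = exp (- enn2real (intensity q \<rho> ?S))"
      using ppp Sset mufin unfolding is_PPP_def
      by (auto dest!: bspec[of _ _ ?S] spec[of _ 0])
    have sub: "{s \<in> space M. hfun v (\<omega> s) y > enat l} \<subseteq> space M - ?E0"
    proof
      fix s assume s: "s \<in> {s \<in> space M. hfun v (\<omega> s) y > enat l}"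
      show "s \<in> space M - ?E0"
      proof (rule ccontr)
        assume "s \<notin> space M - ?E0"
        with s have "emeasure (\<omega> s) ?S = 0" by auto
        then have "enat l \<in> enat ` {l. emeasure (\<omega> s) (Wcross v y \<inter> Wcross v (fst y + int l, snd y + int l)) = 0}"
          unfolding y by auto
        then have "hfun v (\<omega> s) y \<le> enat l" unfolding hfun_def by (rule Inf_lower)
        with s show False by auto
      qed
    qed
    have "measure M {s \<in> space M. hfun v (\<omega> s) y > enat l} \<le> measure M (space M - ?E0)"
    proof (cases "{s \<in> space M. hfun v (\<omega> s) y > enat l} \<in> sets M")
      case True then show ?thesis using sub E0s by (intro finite_measure_mono) auto
    qed (simp add: measure_notin_sets)
    also have "\<dots> = 1 - exp (- enn2real (intensity q \<rho> ?S))" using prob_compl[OF E0s] pE0 by simp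
    also have "\<dots> \<le> enn2real (intensity q \<rho> ?S)"
      using exp_ge_add_one_self[of "- enn2real (intensity q \<rho> ?S)"] by linarith
    also have "\<dots> \<le> B" by (fact m_le)
    finally show "measure M {s \<in> space M. hfun v (\<omega> s) y > enat l} \<le> c1 * exp (- c2 * real l)"
      unfolding Beq .
  qed
qed


end
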